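(* For integers $n,m,N,M$ with $n\ge N$ and $m\ge M$, \[ \sum_{r=N}^n\sum_{s=M}^m q^{n+m-r-s}\,\Phi_{n-r,m-s}\big(zq^{2r-s},wq^{2s-r};q\big)\,\Phi_{r-N,s-M}\big(zq^{2r-s},wq^{2s-r};q^{-1}\big)=\delta_{n,N}\delta_{m,M}. \]
   Context: For $n\in\mathbb{Z}$, $(a;q)_n=(a;q)_\infty/(aq^n;q)_\infty$ (finite product for $n\ge0$; $1/(q;q)_n=0$ for $n<0$), $(a_1,\dots,a_k;q)_n=\prod_i(a_i;q)_n$. For integers $n,m$, \[\Phi_{n,m}(z,w;q):=\frac{(zwq;q)_{n+m}}{(q,zq,zwq;q)_n\,(q,wq,zwq;q)_m},\] a rational function of $z,w,q$; $\Phi_{n,m}(z,w;q^{-1})$ denotes the same expression with $q$ replaced by $q^{-1}$. $\delta$ is the Kronecker delta. *)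

theory Defs
  imports Complex_Main
begin

text \<open>Finite q-Pochhammer symbol (a;q)_n for integer n:
  (a;q)_n = prod_{k=0}^{n-1} (1 - a q^k) for n >= 0, and
  (a;q)_{-k} = 1 / prod_{i=1}^{k} (1 - a q^{-i}) for k > 0
  (this is (a;q)_inf / (a q^n;q)_inf).\<close>
definition qpoch :: "complex \<Rightarrow> complex \<Rightarrow> int \<Rightarrow> complex" where
  "qpoch a q n =
     (if 0 \<le> n then (\<Prod>k<nat n. 1 - a * q ^ k)
      else 1 / (\<Prod>i\<in>{1..nat (- n)}. 1 - a * q powi (- int i)))"

definition Phi :: "int \<Rightarrow> int \<Rightarrow> complex \<Rightarrow> complex \<Rightarrow> complex \<Rightarrow> complex" where
  "Phi n m z w q =
     qpoch (z * w * q) q (n + m) /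
     (qpoch q q n * qpoch (z * q) q n * qpoch (z * w * q) q n *
      qpoch q q m * qpoch (w * q) q m * qpoch (z * w * q) q m)"

end

theory Submission imports Defs "HOL-Computational_Algebra.Polynomial" begin


definition FF :: "complex \<Rightarrow> complex \<Rightarrow> int \<Rightarrow> nat \<Rightarrow> complex" where
  "FF q X e k = (\<Prod>t<k. 1 - X * q powi (e + int t))"

lemma FF_0[simp]: "FF q X e 0 = 1" by (simp add: FF_def)

lemma FF_Suc: "FF q X e (Suc k) = FF q X e k * (1 - X * q powi (e + int k))"
  by (simp add: FF_def)

lemma FF_concat: "FF q X e (k1 + k2) = FF q X e k1 * FF q X (e + int k1) k2"
proof (induction k2)
  case 0 then show ?case by simp
next
  case (Suc k2)
  then show ?case by (simp add: FF_Suc add.assoc algebra_simps)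
qed

lemma FF_front: "FF q X e (Suc k) = (1 - X * q powi e) * FF q X (e + 1) k"
  using FF_concat[of q X e 1 k] by (simp add: FF_def)

lemma FF_nz: assumes "\<And>u. X * q powi u \<noteq> 1" shows "FF q X e k \<noteq> 0"
  using assms by (auto simp: FF_def)

lemma qpowi_ne1: fixes q :: complex assumes "q \<noteq> 0" "\<And>k::nat. k \<ge> 1 \<Longrightarrow> q ^ k \<noteq> 1" "u \<noteq> 0"
  shows "q powi u \<noteq> 1"
proof (cases "u > 0")
  case True
  then have "q powi u = q ^ nat u" unfolding power_int_def by simp
  moreover have "q ^ nat u \<noteq> 1" using assms(2)[of "nat u"] True by linarith
  ultimately show ?thesis by simp
next
  case False
  then have u: "u < 0" using assms(3) by simp
  have e1: "q powi (-u) = q ^ nat (-u)" using u unfolding power_int_def by simp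
  have e2: "q powi (-u) = inverse (q powi u)" by (rule power_int_minus)
  have "q ^ nat (-u) \<noteq> 1" using assms(2)[of "nat (-u)"] u by linarith
  with e1 e2 show ?thesis by (metis inverse_1)
qed

lemma FF_nz2: assumes "\<And>t. t < k \<Longrightarrow> X * q powi (e + int t) \<noteq> 1" shows "FF q X e k \<noteq> 0"
  using assms by (auto simp: FF_def)

locale qctx =
  fixes q :: complex
  assumes q0: "q \<noteq> 0" and qn: "\<And>k::nat. k \<ge> 1 \<Longrightarrow> q ^ k \<noteq> 1"
begin

lemma pa: "q powi (m + n) = q powi m * q powi n"
  using power_int_add q0 by blast

lemma pa': "m + n = k \<Longrightarrow> q powi k = q powi m * q powi n"
  using pa by blast

lemma qne1: "u \<noteq> 0 \<Longrightarrow> q powi u \<noteq> 1"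
  using qpowi_ne1[OF q0 qn] by blast

lemma FF1_nz: assumes "\<And>t. t < k \<Longrightarrow> e + int t \<noteq> 0" shows "FF q 1 e k \<noteq> 0"
  using FF_nz2[of k 1 q e] qne1 assms by auto

definition cf :: "nat \<Rightarrow> nat \<Rightarrow> complex" where
  "cf a i = 1 / (FF q 1 1 i * FF q 1 (int i - int a) (a - i))"

lemma cf_rec_mid:
  assumes "1 \<le> i" "i \<le> a"
  shows "cf (Suc a) i * (1 - q powi (- int a - 1)) = cf a i - q powi (- int a - 1) * cf a (i - 1)"
proof -
  define A where "A = FF q 1 1 (i - 1)"
  define B where "B = FF q 1 (int i - int a) (a - i)"
  define x where "x = q powi (int i)"
  define y where "y = q powi (- int a - 1)"
  have A0: "A \<noteq> 0" unfolding A_def by (rule FF1_nz) auto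
  have B0: "B \<noteq> 0" unfolding B_def by (rule FF1_nz) (use assms in auto)
  have x0: "1 - x \<noteq> 0" unfolding x_def using qne1[of "int i"] assms by auto
  have xy: "x * y = q powi (int i - int a - 1)" unfolding x_def y_def
    using pa'[of "int i" "- int a - 1" "int i - int a - 1"] by simp
  have xy0: "1 - x * y \<noteq> 0" unfolding xy using qne1[of "int i - int a - 1"] assms by auto
  have e1: "FF q 1 1 i = A * (1 - x)"
    using FF_Suc[of q 1 1 "i - 1"] assms unfolding A_def x_def by (simp add: of_nat_diff)
  have e2: "FF q 1 (int i - int (Suc a)) (Suc a - i) = (1 - x * y) * B"
  proof -
    have "Suc a - i = Suc (a - i)" using assms by simp
    moreover have "int i - int (Suc a) = int i - int a - 1" by simp
    moreover have "int i - int a - 1 + 1 = int i - int a" by simp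
    ultimately show ?thesis using FF_front[of q 1 "int i - int a - 1" "a - i"] unfolding B_def xy
      by (simp only: mult_1)
  qed
  have e3: "FF q 1 (int (i - 1) - int a) (a - (i - 1)) = (1 - x * y) * B"
  proof -
    have "a - (i - 1) = Suc (a - i)" using assms by simp
    moreover have "int (i - 1) - int a = int i - int a - 1" using assms by simp
    moreover have "int i - int a - 1 + 1 = int i - int a" by simp
    ultimately show ?thesis using FF_front[of q 1 "int i - int a - 1" "a - i"] unfolding B_def xy
      by (simp only: mult_1)
  qed
  have c1: "cf (Suc a) i = 1 / (A * (1 - x) * ((1 - x * y) * B))"
    unfolding cf_def e1 e2 ..
  have c2: "cf a i = 1 / (A * (1 - x) * B)"
    unfolding cf_def e1 B_def ..
  have c3: "cf a (i - 1) = 1 / (A * ((1 - x * y) * B))"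
    unfolding cf_def e3 A_def ..
  have "cf (Suc a) i * (1 - y) = cf a i - y * cf a (i - 1)"
    unfolding c1 c2 c3 using A0 B0 x0 xy0
    by (simp add: divide_simps) (simp add: algebra_simps)
  then show ?thesis unfolding y_def .
qed

lemma cf_rec_0: "cf (Suc a) 0 * (1 - q powi (- int a - 1)) = cf a 0"
proof -
  have B0: "FF q 1 (- int a) a \<noteq> 0" by (rule FF1_nz) auto
  have y0: "1 - q powi (- int a - 1) \<noteq> 0" using qne1[of "- int a - 1"] by auto
  have h1: "int 0 - int (Suc a) = - int a - 1" "Suc a - 0 = Suc a" "- int a - 1 + 1 = - int a" by simp_all
  have e: "FF q 1 (int 0 - int (Suc a)) (Suc a - 0) = (1 - q powi (- int a - 1)) * FF q 1 (- int a) a"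
    using FF_front[of q 1 "- int a - 1" a] unfolding h1 by simp
  have e2: "FF q 1 (int 0 - int a) (a - 0) = FF q 1 (- int a) a" by simp
  show ?thesis unfolding cf_def e e2 using B0 y0 by (simp add: divide_simps)
qed

lemma cf_rec_top: "cf (Suc a) (Suc a) * (1 - q powi (- int a - 1)) = - (q powi (- int a - 1)) * cf a a"
proof -
  define y where "y = q powi (- int a - 1)"
  define x where "x = q powi (1 + int a)"
  have xy: "x * y = 1" unfolding x_def y_def using pa'[of "1 + int a" "- int a - 1" 0] by simp
  have A0: "FF q 1 1 a \<noteq> 0" by (rule FF1_nz) auto
  have x0: "1 - x \<noteq> 0" unfolding x_def using qne1[of "1 + int a"] by auto
  have e: "FF q 1 1 (Suc a) = FF q 1 1 a * (1 - x)" unfolding x_def by (simp add: FF_Suc)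
  have "cf (Suc a) (Suc a) * (1 - y) = - y * cf a a"
    unfolding cf_def using e A0 x0 xy
    by (simp add: divide_simps) (simp add: algebra_simps)
  then show ?thesis unfolding y_def .
qed

definition ce :: "nat \<Rightarrow> nat \<Rightarrow> complex" where
  "ce a i = (if i \<le> a then cf a i else 0)"

lemma ce_rec: "ce (Suc a) i * (1 - q powi (- int a - 1)) =
   ce a i - q powi (- int a - 1) * (if i = 0 then 0 else ce a (i - 1))"
proof -
  consider "i = 0" | "1 \<le> i \<and> i \<le> a" | "i = Suc a" | "i > Suc a" by linarith
  then show ?thesis
  proof cases
    case 1 then show ?thesis using cf_rec_0 by (simp add: ce_def)
  next
    case 2 then show ?thesis using cf_rec_mid[of i a] by (auto simp: ce_def)
  next
    case 3 then show ?thesis using cf_rec_top[of a] by (simp add: ce_def)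
  next
    case 4 then show ?thesis by (simp add: ce_def)
  qed
qed

definition GG :: "nat \<Rightarrow> complex \<Rightarrow> complex" where
  "GG a x = (\<Sum>i\<le>a. cf a i * x ^ i)"

lemma GG_ce: "GG a x = (\<Sum>i\<le>a. ce a i * x ^ i)"
  unfolding GG_def ce_def by simp

lemma GG_rec: "GG (Suc a) x * (1 - q powi (- int a - 1)) = (1 - x * q powi (- int a - 1)) * GG a x"
proof -
  define y where "y = q powi (- int a - 1)"
  have "GG (Suc a) x * (1 - y) = (\<Sum>i\<le>Suc a. (ce (Suc a) i * (1 - y)) * x ^ i)"
    unfolding GG_ce sum_distrib_right by (simp add: algebra_simps)
  also have "\<dots> = (\<Sum>i\<le>Suc a. ce a i * x ^ i - y * ((if i = 0 then 0 else ce a (i - 1)) * x ^ i))"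
  proof (intro sum.cong refl)
    fix i
    have F: "ce (Suc a) i * (1 - y) = ce a i - y * (if i = 0 then 0 else ce a (i - 1))"
      unfolding y_def by (rule ce_rec)
    show "ce (Suc a) i * (1 - y) * x ^ i = ce a i * x ^ i - y * ((if i = 0 then 0 else ce a (i - 1)) * x ^ i)"
      by (simp only: F) (simp add: algebra_simps)
  qed
  also have "\<dots> = (\<Sum>i\<le>Suc a. ce a i * x ^ i) - y * (\<Sum>i\<le>Suc a. (if i = 0 then 0 else ce a (i - 1)) * x ^ i)"
    by (simp only: sum_subtractf sum_distrib_left)
  also have "(\<Sum>i\<le>Suc a. ce a i * x ^ i) = GG a x"
    unfolding GG_ce by (simp add: ce_def)
  also have "(\<Sum>i\<le>Suc a. (if i = 0 then 0 else ce a (i - 1)) * x ^ i) = x * GG a x"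
    unfolding GG_ce sum.atMost_Suc_shift by (simp add: sum_distrib_left algebra_simps)
  finally show ?thesis unfolding y_def by (simp add: algebra_simps)
qed

lemma GG_closed: "GG a x * FF q 1 (- int a) a = FF q x (- int a) a"
proof (induction a)
  case 0 then show ?case by (simp add: GG_def cf_def)
next
  case (Suc a)
  have h1: "- int (Suc a) = - int a - 1" "- int a - 1 + 1 = - int a" by simp_all
  have e1: "FF q 1 (- int (Suc a)) (Suc a) = (1 - q powi (- int a - 1)) * FF q 1 (- int a) a"
    using FF_front[of q 1 "- int a - 1" a] unfolding h1 by simp
  have e2: "FF q x (- int (Suc a)) (Suc a) = (1 - x * q powi (- int a - 1)) * FF q x (- int a) a"
    using FF_front[of q x "- int a - 1" a] unfolding h1 by simp
  have "GG (Suc a) x * FF q 1 (- int (Suc a)) (Suc a)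
     = (GG (Suc a) x * (1 - q powi (- int a - 1))) * FF q 1 (- int a) a"
    unfolding e1 by (simp only: mult.assoc)
  also have "\<dots> = (1 - x * q powi (- int a - 1)) * (GG a x * FF q 1 (- int a) a)"
    unfolding GG_rec by (simp only: mult.assoc)
  also have "\<dots> = FF q x (- int (Suc a)) (Suc a)" unfolding e2 Suc ..
  finally show ?case .
qed

lemma GG_zero: assumes "1 \<le> k" "k \<le> a" shows "GG a (q ^ k) = 0"
proof -
  have B0: "FF q 1 (- int a) a \<noteq> 0" by (rule FF1_nz) auto
  have "FF q (q ^ k) (- int a) a = 0"
  proof -
    have t: "a - k < a" using assms by simp
    have "q ^ k * q powi (- int a + int (a - k)) = 1"
      using pa'[of "int k" "- int a + int (a - k)" 0] assms by simp
    then show ?thesis unfolding FF_def using t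
      by (intro prod_zero) (auto intro!: bexI[of _ "a - k"])
  qed
  then show ?thesis using GG_closed[of a "q ^ k"] B0 by simp
qed

lemma ann_poly: assumes "degree p < a"
  shows "(\<Sum>i\<le>a. cf a i * q ^ i * poly p (q ^ i)) = 0"
proof -
  have "(\<Sum>i\<le>a. cf a i * q ^ i * poly p (q ^ i))
      = (\<Sum>i\<le>a. \<Sum>k\<le>degree p. coeff p k * (cf a i * (q ^ Suc k) ^ i))"
    unfolding poly_altdef sum_distrib_left
    by (intro sum.cong refl) (simp add: algebra_simps power_mult[symmetric] power_add[symmetric])
  also have "\<dots> = (\<Sum>k\<le>degree p. coeff p k * GG a (q ^ Suc k))"
    unfolding GG_def sum_distrib_left by (rule sum.swap)
  also have "\<dots> = 0"
  proof (intro sum.neutral ballI)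
    fix k assume "k \<in> {..degree p}"
    then have "GG a (q ^ Suc k) = 0" using assms by (intro GG_zero) auto
    then show "coeff p k * GG a (q ^ Suc k) = 0" by simp
  qed
  finally show ?thesis .
qed

end



lemma FF_gap: "e = int i + 1 + int g \<Longrightarrow> FF q X 1 i * FF q X (int i + 1) g * FF q X e k = FF q X 1 (i + g + k)"
  using FF_concat[of q X 1 i g] FF_concat[of q X 1 "i + g" k] by (simp add: add.commute add.left_commute)

lemma FF_overlap: assumes "s \<le> T" "1 \<le> T"
  shows "FF q X 1 s * FF q X (int s) (T - s) = (1 - X * q powi (int s)) * FF q X 1 (T - 1)"
proof (cases "s < T")
  case True
  have "T - s = Suc (T - 1 - s)" using True by simp
  then have A: "FF q X (int s) (T - s) = (1 - X * q powi (int s)) * FF q X (int s + 1) (T - 1 - s)"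
    using FF_front by simp
  have B: "FF q X 1 s * FF q X (int s + 1) (T - 1 - s) = FF q X 1 (T - 1)"
    using FF_concat[of q X 1 s "T - 1 - s"] True by (simp add: add.commute)
  show ?thesis unfolding A B[symmetric] by (simp only: mult.left_commute)
next
  case False
  then have "s = T" using assms by simp
  then have "s = Suc (T - 1)" using assms by simp
  then have "FF q X 1 s = FF q X 1 (T - 1) * (1 - X * q powi (1 + int (T - 1)))"
    using FF_Suc by simp
  moreover have "1 + int (T - 1) = int s" using \<open>s = Suc (T - 1)\<close> by simp
  ultimately show ?thesis using \<open>s = T\<close> by (simp add: algebra_simps)
qed

definition pF :: "complex \<Rightarrow> complex \<Rightarrow> nat \<Rightarrow> complex poly" where
  "pF q X g = (\<Prod>t<g. [:1, - X * q ^ Suc t:])"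

lemma degree_pF: "degree (pF q X g) \<le> g"
proof -
  have "degree (pF q X g) \<le> (\<Sum>t<g. degree [:1, - X * q ^ Suc t:])"
    unfolding pF_def using degree_prod_sum_le[of "{..<g}" "\<lambda>t. [:1, - X * q ^ Suc t:]"] by (simp add: o_def)
  also have "\<dots> \<le> (\<Sum>t<g. 1)" by (intro sum_mono) auto
  finally show ?thesis by simp
qed

context qctx begin

lemma poly_pF: "poly (pF q X g) (q ^ i) = FF q X (int i + 1) g"
  unfolding pF_def FF_def poly_prod
proof (intro prod.cong refl)
  fix t
  have h: "int i + 1 + int t = int (Suc t + i)" by simp
  have "q powi (int i + 1 + int t) = q powi (int (Suc t + i))" by (simp only: h)
  also have "\<dots> = q ^ Suc t * q ^ i" by (simp only: power_int_of_nat power_add)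
  finally show "poly [:1, - X * q ^ Suc t:] (q ^ i) = 1 - X * q powi (int i + 1 + int t)"
    by (simp add: algebra_simps)
qed

definition PP :: "nat \<Rightarrow> nat \<Rightarrow> complex \<Rightarrow> complex \<Rightarrow> nat \<Rightarrow> complex" where
  "PP a b Zp cc i = q ^ i / (FF q 1 1 i * FF q 1 (int i - int a) (a - i) * FF q Zp 1 i
      * FF q Zp (int a - int b + int i) (a - i) * FF q cc 1 i * FF q cc (int b + int i) (a - i))"

lemma PP_alt: "PP a b Zp cc i = cf a i * q ^ i / ((FF q Zp 1 i * FF q Zp (int a - int b + int i) (a - i))
     * (FF q cc 1 i * FF q cc (int b + int i) (a - i)))"
  unfolding PP_def cf_def by (simp add: field_simps)

lemma frac_helper:
  fixes EZ Ec pz pc KZ Kc C R :: complex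
  assumes "EZ \<noteq> 0" "Ec \<noteq> 0" "pz \<noteq> 0" "pc \<noteq> 0" "EZ * pz = KZ" "Ec * pc = Kc"
  shows "C / (EZ * Ec) * R = C * (pz * pc * R) / (KZ * Kc)"
  using assms by (auto simp: field_simps)

lemma PV1:
  assumes hZ: "\<And>u. Zp * q powi u \<noteq> 1" and hc: "\<And>u. cc * q powi u \<noteq> 1"
    and ab: "b < a" "1 \<le> b" and dr: "degree r \<le> 1"
  shows "(\<Sum>i\<le>a. PP a b Zp cc i * poly r (q ^ i)) = 0"
proof -
  define pz where "pz = pF q Zp (a - b - 1)"
  define pc where "pc = pF q cc (b - 1)"
  define KZ where "KZ = FF q Zp 1 (2 * a - b - 1)"
  define Kc where "Kc = FF q cc 1 (a + b - 1)"
  have trm: "PP a b Zp cc i * poly r (q ^ i) = cf a i * q ^ i * poly (pz * pc * r) (q ^ i) / (KZ * Kc)"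
    if i: "i \<le> a" for i
  proof -
    have eZ: "(FF q Zp 1 i * FF q Zp (int a - int b + int i) (a - i)) * poly pz (q ^ i) = KZ"
    proof -
      have "FF q Zp 1 i * FF q Zp (int i + 1) (a - b - 1) * FF q Zp (int a - int b + int i) (a - i)
          = FF q Zp 1 (i + (a - b - 1) + (a - i))"
        by (rule FF_gap) (use ab in simp)
      moreover have len: "i + (a - b - 1) + (a - i) = 2 * a - b - 1" using i ab by simp
      ultimately have g: "FF q Zp 1 i * FF q Zp (int i + 1) (a - b - 1) * FF q Zp (int a - int b + int i) (a - i) = KZ"
        by (simp only: KZ_def)
      show ?thesis unfolding pz_def poly_pF using g by (simp only: ac_simps)
    qed
    have ec: "(FF q cc 1 i * FF q cc (int b + int i) (a - i)) * poly pc (q ^ i) = Kc"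
    proof -
      have "FF q cc 1 i * FF q cc (int i + 1) (b - 1) * FF q cc (int b + int i) (a - i)
          = FF q cc 1 (i + (b - 1) + (a - i))"
        by (rule FF_gap) (use ab in simp)
      moreover have len: "i + (b - 1) + (a - i) = a + b - 1" using i ab by simp
      ultimately have g: "FF q cc 1 i * FF q cc (int i + 1) (b - 1) * FF q cc (int b + int i) (a - i) = Kc"
        by (simp only: Kc_def)
      show ?thesis unfolding pc_def poly_pF using g by (simp only: ac_simps)
    qed
    have n1: "FF q Zp 1 i * FF q Zp (int a - int b + int i) (a - i) \<noteq> 0" using FF_nz[OF hZ] by simp
    have n2: "FF q cc 1 i * FF q cc (int b + int i) (a - i) \<noteq> 0" using FF_nz[OF hc] by simp
    have n3: "poly pz (q ^ i) \<noteq> 0" unfolding pz_def poly_pF using FF_nz[OF hZ] .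
    have n4: "poly pc (q ^ i) \<noteq> 0" unfolding pc_def poly_pF using FF_nz[OF hc] .
    show ?thesis unfolding PP_alt poly_mult
      by (rule frac_helper[OF n1 n2 n3 n4 eZ ec])
  qed
  have "(\<Sum>i\<le>a. PP a b Zp cc i * poly r (q ^ i)) = (\<Sum>i\<le>a. cf a i * q ^ i * poly (pz * pc * r) (q ^ i)) / (KZ * Kc)"
    unfolding sum_divide_distrib by (rule sum.cong) (simp_all add: trm)
  also have "(\<Sum>i\<le>a. cf a i * q ^ i * poly (pz * pc * r) (q ^ i)) = 0"
  proof (rule ann_poly)
    have "degree (pz * pc * r) \<le> degree pz + degree pc + degree r"
      by (meson add_le_mono degree_mult_le le_trans order_refl)
    also have "\<dots> \<le> (a - b - 1) + (b - 1) + 1"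
      unfolding pz_def pc_def using degree_pF dr by (meson add_le_mono)
    finally show "degree (pz * pc * r) < a" using ab by linarith
  qed
  finally show ?thesis by simp
qed

lemma frac_helper2:
  fixes EZ Ec pz u KZ Kc C :: complex
  assumes "EZ \<noteq> 0" "pz \<noteq> 0" "u \<noteq> 0" "Kc \<noteq> 0" "EZ * pz = KZ" "Ec = u * Kc"
  shows "C / (EZ * Ec) * u = C * pz / (KZ * Kc)"
  using assms by (auto simp: field_simps)

lemma PV0:
  assumes hZ: "\<And>u. Zp * q powi u \<noteq> 1" and hc: "\<And>u. cc * q powi u \<noteq> 1"
    and a: "1 \<le> a"
  shows "(\<Sum>i\<le>a. PP a 0 Zp cc i * (1 - cc * q ^ i)) = 0"
proof -
  define pz where "pz = pF q Zp (a - 1)"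
  define KZ where "KZ = FF q Zp 1 (2 * a - 1)"
  define Kc where "Kc = FF q cc 1 (a - 1)"
  have trm: "PP a 0 Zp cc i * (1 - cc * q ^ i) = cf a i * q ^ i * poly pz (q ^ i) / (KZ * Kc)"
    if i: "i \<le> a" for i
  proof -
    have eZ: "(FF q Zp 1 i * FF q Zp (int a - int 0 + int i) (a - i)) * poly pz (q ^ i) = KZ"
    proof -
      have "FF q Zp 1 i * FF q Zp (int i + 1) (a - 1) * FF q Zp (int a - int 0 + int i) (a - i)
          = FF q Zp 1 (i + (a - 1) + (a - i))"
        by (rule FF_gap) (use a in simp)
      moreover have len: "i + (a - 1) + (a - i) = 2 * a - 1" using i a by simp
      ultimately have g: "FF q Zp 1 i * FF q Zp (int i + 1) (a - 1) * FF q Zp (int a - int 0 + int i) (a - i) = KZ"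
        by (simp only: KZ_def)
      show ?thesis unfolding pz_def poly_pF using g by (simp only: ac_simps)
    qed
    have ec: "FF q cc 1 i * FF q cc (int 0 + int i) (a - i) = (1 - cc * q ^ i) * Kc"
      using FF_overlap[of i a q cc] i a unfolding Kc_def by simp
    have n1: "FF q Zp 1 i * FF q Zp (int a - int 0 + int i) (a - i) \<noteq> 0" using FF_nz[OF hZ] by simp
    have n3: "poly pz (q ^ i) \<noteq> 0" unfolding pz_def poly_pF using FF_nz[OF hZ] .
    have n2: "1 - cc * q ^ i \<noteq> 0" using hc[of "int i"] by auto
    have n4: "Kc \<noteq> 0" unfolding Kc_def using FF_nz[OF hc] .
    show ?thesis unfolding PP_alt
      by (rule frac_helper2[OF n1 n3 n2 n4 eZ ec])
  qed
  have "(\<Sum>i\<le>a. PP a 0 Zp cc i * (1 - cc * q ^ i)) = (\<Sum>i\<le>a. cf a i * q ^ i * poly pz (q ^ i)) / (KZ * Kc)"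
    unfolding sum_divide_distrib by (rule sum.cong) (simp_all add: trm)
  also have "(\<Sum>i\<le>a. cf a i * q ^ i * poly pz (q ^ i)) = 0"
  proof (rule ann_poly)
    show "degree pz < a" unfolding pz_def using degree_pF[of q Zp "a - 1"] a by linarith
  qed
  finally show ?thesis by simp
qed

lemma PV2:
  assumes hZ: "\<And>u. Zp * q powi u \<noteq> 1" and hc: "\<And>u. cc * q powi u \<noteq> 1"
    and a: "1 \<le> a"
  shows "(\<Sum>i\<le>a. PP a a Zp cc i * (1 - Zp * q ^ i)) = 0"
proof -
  define pc where "pc = pF q cc (a - 1)"
  define Kc where "Kc = FF q cc 1 (2 * a - 1)"
  define KZ where "KZ = FF q Zp 1 (a - 1)"
  have trm: "PP a a Zp cc i * (1 - Zp * q ^ i) = cf a i * q ^ i * poly pc (q ^ i) / (Kc * KZ)"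
    if i: "i \<le> a" for i
  proof -
    have ec: "(FF q cc 1 i * FF q cc (int a + int i) (a - i)) * poly pc (q ^ i) = Kc"
    proof -
      have "FF q cc 1 i * FF q cc (int i + 1) (a - 1) * FF q cc (int a + int i) (a - i)
          = FF q cc 1 (i + (a - 1) + (a - i))"
        by (rule FF_gap) (use a in simp)
      moreover have len: "i + (a - 1) + (a - i) = 2 * a - 1" using i a by simp
      ultimately have g: "FF q cc 1 i * FF q cc (int i + 1) (a - 1) * FF q cc (int a + int i) (a - i) = Kc"
        by (simp only: Kc_def)
      show ?thesis unfolding pc_def poly_pF using g by (simp only: ac_simps)
    qed
    have eZ: "FF q Zp 1 i * FF q Zp (int a - int a + int i) (a - i) = (1 - Zp * q ^ i) * KZ"
      using FF_overlap[of i a q Zp] i a unfolding KZ_def by simp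
    have n1: "FF q cc 1 i * FF q cc (int a + int i) (a - i) \<noteq> 0" using FF_nz[OF hc] by simp
    have n3: "poly pc (q ^ i) \<noteq> 0" unfolding pc_def poly_pF using FF_nz[OF hc] .
    have n2: "1 - Zp * q ^ i \<noteq> 0" using hZ[of "int i"] by auto
    have n4: "KZ \<noteq> 0" unfolding KZ_def using FF_nz[OF hZ] .
    have "PP a a Zp cc i = cf a i * q ^ i / ((FF q cc 1 i * FF q cc (int a + int i) (a - i))
       * (FF q Zp 1 i * FF q Zp (int a - int a + int i) (a - i)))"
      unfolding PP_alt by (simp only: ac_simps)
    then show ?thesis
      using frac_helper2[OF n1 n3 n2 n4 ec eZ] by simp
  qed
  have "(\<Sum>i\<le>a. PP a a Zp cc i * (1 - Zp * q ^ i)) = (\<Sum>i\<le>a. cf a i * q ^ i * poly pc (q ^ i)) / (Kc * KZ)"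
    unfolding sum_divide_distrib by (rule sum.cong) (simp_all add: trm)
  also have "(\<Sum>i\<le>a. cf a i * q ^ i * poly pc (q ^ i)) = 0"
  proof (rule ann_poly)
    show "degree pc < a" unfolding pc_def using degree_pF[of q cc "a - 1"] a by linarith
  qed
  finally show ?thesis by simp
qed

end



lemma Phi_nat: "Phi (int k) (int l) X Y p =
  (\<Prod>t<k+l. 1 - X * Y * p * p ^ t) /
  ((\<Prod>t<k. 1 - p * p ^ t) * (\<Prod>t<k. 1 - X * p * p ^ t) * (\<Prod>t<k. 1 - X * Y * p * p ^ t) *
   (\<Prod>t<l. 1 - p * p ^ t) * (\<Prod>t<l. 1 - Y * p * p ^ t) * (\<Prod>t<l. 1 - X * Y * p * p ^ t))"
  unfolding Phi_def qpoch_def of_nat_add[symmetric] nat_int by (simp only: of_nat_0_le_iff if_True)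

context qctx begin

lemma fwd: "(\<Prod>t<k. 1 - X * q * q ^ t) = FF q X 1 k"
  unfolding FF_def
proof (intro prod.cong refl)
  fix t
  have "q powi (1 + int t) = q powi (int (Suc t))" by simp
  also have "\<dots> = q * q ^ t" by (simp only: power_int_of_nat power_Suc)
  finally show "1 - X * q * q ^ t = 1 - X * q powi (1 + int t)" by (simp add: mult.assoc)
qed

lemma fwd1: "(\<Prod>t<k. 1 - q * q ^ t) = FF q 1 1 k"
  using fwd[of 1 k] by simp

lemma ipow: "q powi e * inverse q * inverse q ^ t = q powi (e - 1 - int t)"
proof -
  have C: "q powi (-1) * q powi (- int t) = inverse q * inverse q ^ t"
    by (simp only: power_int_minus power_int_1_right power_int_of_nat power_inverse)
  have "q powi e * inverse q * inverse q ^ t = q powi e * q powi (-1) * q powi (- int t)"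
    by (simp only: C mult.assoc)
  also have "\<dots> = q powi (e + (-1)) * q powi (- int t)" by (simp only: pa[symmetric])
  also have "\<dots> = q powi (e + (-1) + (- int t))" by (simp only: pa[symmetric])
  also have "e + (-1) + (- int t) = e - 1 - int t" by simp
  finally show ?thesis .
qed

lemma rev: "(\<Prod>t<k. 1 - X * q powi e * inverse q * inverse q ^ t) = FF q X (e - int k) k"
proof -
  have "FF q X (e - int k) k = (\<Prod>t<k. 1 - X * q powi (e - int k + int (k - Suc t)))"
    unfolding FF_def by (rule prod.nat_diff_reindex[symmetric])
  also have "\<dots> = (\<Prod>t<k. 1 - X * q powi e * inverse q * inverse q ^ t)"
  proof (intro prod.cong refl)
    fix t assume "t \<in> {..<k}"
    then have ex: "e - int k + int (k - Suc t) = e - 1 - int t" by auto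
    show "1 - X * q powi (e - int k + int (k - Suc t)) = 1 - X * q powi e * inverse q * inverse q ^ t"
      unfolding ex ipow[symmetric] by (simp only: mult.assoc)
  qed
  finally show ?thesis ..
qed

lemma rev1: "(\<Prod>t<k. 1 - inverse q * inverse q ^ t) = FF q 1 (- int k) k"
  using rev[of 1 0 k] by simp

lemma summand_fact:
  fixes Z W :: complex
  assumes ij: "i \<le> a" "j \<le> b" and ab: "1 \<le> a + b"
  shows "Phi (int a - int i) (int b - int j) (Z * q powi (2 * int a - int b)) (W * q powi (2 * int b - int a)) (inverse q)
     * q ^ (i + j) * Phi (int i) (int j) Z W q
   = FF q (Z * W) 1 (a + b - 1) * (1 - Z * W * q ^ (i + j)) * PP a b Z (Z * W) i * PP b a W (Z * W) j"
proof -
  have k: "int a - int i = int (a - i)" "int b - int j = int (b - j)" using ij by auto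
  have XY: "Z * q powi (2 * int a - int b) * (W * q powi (2 * int b - int a)) = Z * W * q powi (int a + int b)"
    using pa'[of "2 * int a - int b" "2 * int b - int a" "int a + int b"] by simp
  have e1: "int a + int b - int (a - i + (b - j)) = int (i + j)" and len: "a - i + (b - j) = a + b - (i + j)"
    using ij by auto
  have N2: "FF q (Z * W) (int a + int b - int (a - i + (b - j))) (a - i + (b - j)) * FF q (Z * W) 1 (i + j)
      = (1 - Z * W * q ^ (i + j)) * FF q (Z * W) 1 (a + b - 1)"
    unfolding e1 len using FF_overlap[of "i + j" "a + b" q "Z * W", unfolded power_int_of_nat] ij ab
    by (simp add: mult.commute)
  have e2: "- int (a - i) = int i - int a" "2 * int a - int b - int (a - i) = int a - int b + int i"
    "int a + int b - int (a - i) = int b + int i"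
    "- int (b - j) = int j - int b" "2 * int b - int a - int (b - j) = int b - int a + int j"
    "int a + int b - int (b - j) = int a + int j"
    using ij by auto
  have H: "\<And>x y z u v :: complex. x / y * z * (u / v) = (x * u) * z / (y * v)"
    by (simp add: divide_inverse ac_simps)
  show ?thesis
    unfolding k Phi_nat XY rev rev1 fwd fwd1 e2 H N2 PP_def
    by (simp add: divide_inverse ac_simps power_add)
qed

lemma BA_core:
  fixes Z W :: complex
  assumes hZ: "\<And>u. Z * q powi u \<noteq> 1" and hW: "\<And>u. W * q powi u \<noteq> 1"
    and hc: "\<And>u. Z * W * q powi u \<noteq> 1"
  shows "(\<Sum>i\<le>a. \<Sum>j\<le>b. Phi (int a - int i) (int b - int j) (Z * q powi (2 * int a - int b))
            (W * q powi (2 * int b - int a)) (inverse q) * q ^ (i + j) * Phi (int i) (int j) Z W q)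
        = (if a = 0 \<and> b = 0 then 1 else 0)"
proof (cases "a = 0 \<and> b = 0")
  case True
  then show ?thesis by (simp add: Phi_def qpoch_def)
next
  case False
  then have ab: "1 \<le> a + b" by auto
  define c where "c = Z * W"
  have hc': "\<And>u. c * q powi u \<noteq> 1" unfolding c_def by (rule hc)
  define K where "K = FF q c 1 (a + b - 1)"
  define P where "P i = PP a b Z c i" for i
  define Q where "Q j = PP b a W c j" for j
  have "(\<Sum>i\<le>a. \<Sum>j\<le>b. Phi (int a - int i) (int b - int j) (Z * q powi (2 * int a - int b))
            (W * q powi (2 * int b - int a)) (inverse q) * q ^ (i + j) * Phi (int i) (int j) Z W q)
      = (\<Sum>i\<le>a. \<Sum>j\<le>b. K * P i * Q j * (1 - c * q ^ (i + j)))"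
  proof (intro sum.cong refl)
    fix i j assume i: "i \<in> {..a}" and j: "j \<in> {..b}"
    show "Phi (int a - int i) (int b - int j) (Z * q powi (2 * int a - int b))
            (W * q powi (2 * int b - int a)) (inverse q) * q ^ (i + j) * Phi (int i) (int j) Z W q
        = K * P i * Q j * (1 - c * q ^ (i + j))"
      using i j by (subst summand_fact[OF _ _ ab]) (auto simp: K_def P_def Q_def c_def ac_simps)
  qed
  also have "\<dots> = 0"
  proof -
    consider "b < a \<and> b = 0" | "b < a \<and> 1 \<le> b" | "a = b" | "a < b \<and> a = 0" | "a < b \<and> 1 \<le> a"
      by linarith
    then show ?thesis
    proof cases
      case 1
      then have "(\<Sum>i\<le>a. \<Sum>j\<le>b. K * P i * Q j * (1 - c * q ^ (i + j)))
          = K * Q 0 * (\<Sum>i\<le>a. PP a 0 Z c i * (1 - c * q ^ i))"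
        by (simp add: P_def sum_distrib_left ac_simps)
      also have "\<dots> = 0" using PV0[OF hZ hc', of a] 1 by simp
      finally show ?thesis .
    next
      case 2
      have "(\<Sum>i\<le>a. \<Sum>j\<le>b. K * P i * Q j * (1 - c * q ^ (i + j)))
          = (\<Sum>j\<le>b. K * Q j * (\<Sum>i\<le>a. P i * poly [:1, - c * q ^ j:] (q ^ i)))"
        by (subst sum.swap) (simp add: sum_distrib_left ac_simps power_add)
      also have "\<dots> = 0"
      proof (intro sum.neutral ballI)
        fix j
        have "(\<Sum>i\<le>a. P i * poly [:1, - c * q ^ j:] (q ^ i)) = 0"
          unfolding P_def using 2 by (intro PV1[OF hZ hc']) auto
        then show "K * Q j * (\<Sum>i\<le>a. P i * poly [:1, - c * q ^ j:] (q ^ i)) = 0" by simp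
      qed
      finally show ?thesis .
    next
      case 3
      then have a1: "1 \<le> a" using ab by simp
      have "(\<Sum>i\<le>a. \<Sum>j\<le>b. K * P i * Q j * (1 - c * q ^ (i + j)))
          = (\<Sum>i\<le>a. \<Sum>j\<le>b. K * (P i * (1 - Z * q ^ i)) * Q j + K * Z * (P i * q ^ i) * (Q j * (1 - W * q ^ j)))"
        by (intro sum.cong refl) (simp add: c_def algebra_simps power_add)
      also have "\<dots> = K * (\<Sum>i\<le>a. P i * (1 - Z * q ^ i)) * (\<Sum>j\<le>b. Q j)
           + K * Z * (\<Sum>i\<le>a. P i * q ^ i) * (\<Sum>j\<le>b. Q j * (1 - W * q ^ j))"
        by (simp add: sum.distrib sum_distrib_left sum_distrib_right ac_simps) (rule sum.swap)
      also have "(\<Sum>i\<le>a. P i * (1 - Z * q ^ i)) = 0"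
        unfolding P_def using PV2[OF hZ hc' a1] 3 by simp
      also have "(\<Sum>j\<le>b. Q j * (1 - W * q ^ j)) = 0"
      proof -
        have hcW: "\<And>u. c * q powi u \<noteq> 1" by (rule hc')
        show ?thesis unfolding Q_def using PV2[OF hW hcW, of b] 3 a1 by simp
      qed
      finally show ?thesis by simp
    next
      case 4
      then have "(\<Sum>i\<le>a. \<Sum>j\<le>b. K * P i * Q j * (1 - c * q ^ (i + j)))
          = K * P 0 * (\<Sum>j\<le>b. PP b 0 W c j * (1 - c * q ^ j))"
        by (simp add: Q_def sum_distrib_left ac_simps)
      also have "\<dots> = 0" using PV0[OF hW hc', of b] 4 by simp
      finally show ?thesis .
    next
      case 5
      have "(\<Sum>i\<le>a. \<Sum>j\<le>b. K * P i * Q j * (1 - c * q ^ (i + j)))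
          = (\<Sum>i\<le>a. K * P i * (\<Sum>j\<le>b. Q j * poly [:1, - c * q ^ i:] (q ^ j)))"
        by (simp add: sum_distrib_left ac_simps power_add)
      also have "\<dots> = 0"
      proof (intro sum.neutral ballI)
        fix i
        have "(\<Sum>j\<le>b. Q j * poly [:1, - c * q ^ i:] (q ^ j)) = 0"
          unfolding Q_def using 5 by (intro PV1[OF hW hc']) auto
        then show "K * P i * (\<Sum>j\<le>b. Q j * poly [:1, - c * q ^ i:] (q ^ j)) = 0" by simp
      qed
      finally show ?thesis .
    qed
  qed
  finally show ?thesis using False by simp
qed

end



definition box :: "int \<times> int \<Rightarrow> int \<times> int \<Rightarrow> (int \<times> int) set" where
  "box y x = {fst y..fst x} \<times> {snd y..snd x}"

definition leq :: "int \<times> int \<Rightarrow> int \<times> int \<Rightarrow> bool" where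
  "leq r x \<longleftrightarrow> fst r \<le> fst x \<and> snd r \<le> snd x"

lemma box_iff: "r \<in> box y x \<longleftrightarrow> leq y r \<and> leq r x"
  by (cases r) (auto simp: box_def leq_def)

lemma finite_box[simp]: "finite (box y x)" by (simp add: box_def)

lemma tri:
  fixes A B :: "int \<times> int \<Rightarrow> int \<times> int \<Rightarrow> complex"
  assumes Az: "\<And>x r. \<not> leq r x \<Longrightarrow> A x r = 0"
    and Bz: "\<And>x r. \<not> leq r x \<Longrightarrow> B x r = 0"
    and Ad: "\<And>x. A x x = 1" and Bd: "\<And>x. B x x = 1"
    and BA: "\<And>x y. leq y x \<Longrightarrow> (\<Sum>r\<in>box y x. B x r * A r y) = (if x = y then 1 else 0)"
  shows "leq y x \<Longrightarrow> (\<Sum>r\<in>box y x. A x r * B r y) = (if x = y then 1 else 0)"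
proof -
  define C where "C x y = (\<Sum>r\<in>box y x. A x r * B r y)" for x y
  have key: "(\<Sum>r\<in>box y x. B x r * C r y) = B x y" if yx: "leq y x" for x y
  proof -
    have "(\<Sum>r\<in>box y x. B x r * C r y) = (\<Sum>r\<in>box y x. \<Sum>s\<in>box y x. B x r * (A r s * B s y))"
    proof (intro sum.cong refl)
      fix r assume r: "r \<in> box y x"
      have "C r y = (\<Sum>s\<in>box y x. A r s * B s y)"
        unfolding C_def
      proof (rule sum.mono_neutral_left)
        show "box y r \<subseteq> box y x" using r by (auto simp: box_iff leq_def)
        show "\<forall>s\<in>box y x - box y r. A r s * B s y = 0"
          using Az by (auto simp: box_iff)
      qed simp
      then show "B x r * C r y = (\<Sum>s\<in>box y x. B x r * (A r s * B s y))"
        by (simp add: sum_distrib_left)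
    qed
    also have "\<dots> = (\<Sum>s\<in>box y x. \<Sum>r\<in>box y x. B x r * (A r s * B s y))"
      by (rule sum.swap)
    also have "\<dots> = (\<Sum>s\<in>box y x. (\<Sum>r\<in>box s x. B x r * A r s) * B s y)"
    proof (intro sum.cong refl)
      fix s assume s: "s \<in> box y x"
      have "(\<Sum>r\<in>box y x. B x r * (A r s * B s y)) = (\<Sum>r\<in>box y x. B x r * A r s) * B s y"
        by (simp add: sum_distrib_right mult.assoc)
      also have "(\<Sum>r\<in>box y x. B x r * A r s) = (\<Sum>r\<in>box s x. B x r * A r s)"
      proof (rule sum.mono_neutral_right)
        show "box s x \<subseteq> box y x" using s by (auto simp: box_iff leq_def)
        show "\<forall>r\<in>box y x - box s x. B x r * A r s = 0"
        proof
          fix r assume "r \<in> box y x - box s x"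
          then have "\<not> leq s r" by (auto simp: box_iff)
          then show "B x r * A r s = 0" using Az[of s r] by simp
        qed
      qed simp
      finally show "(\<Sum>r\<in>box y x. B x r * (A r s * B s y)) = (\<Sum>r\<in>box s x. B x r * A r s) * B s y" .
    qed
    also have "\<dots> = (\<Sum>s\<in>box y x. (if x = s then 1 else 0) * B s y)"
      by (intro sum.cong refl) (simp add: BA box_iff)
    also have "\<dots> = B x y"
    proof -
      have xin: "x \<in> box y x" using yx by (simp add: box_iff leq_def)
      have "(\<Sum>s\<in>box y x. (if x = s then 1 else 0) * B s y) = (\<Sum>s\<in>box y x. if x = s then B s y else 0)"
        by (intro sum.cong) auto
      also have "\<dots> = B x y" using xin by (simp add: sum.delta)
      finally show ?thesis .
    qed
    finally show ?thesis .
  qed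
  have main: "\<forall>x. leq y x \<longrightarrow> nat ((fst x - fst y) + (snd x - snd y)) = k \<longrightarrow> C x y = (if x = y then 1 else 0)" for k
  proof (induction k rule: less_induct)
    case (less k)
    show ?case
    proof (intro allI impI)
      fix x assume yx: "leq y x" and k: "nat ((fst x - fst y) + (snd x - snd y)) = k"
      show "C x y = (if x = y then 1 else 0)"
      proof (cases "x = y")
        case True
        have "box y y = {y}" by (cases y) (auto simp: box_def)
        then show ?thesis using True by (simp add: C_def Ad Bd)
      next
        case False
        have xin: "x \<in> box y x" using yx by (simp add: box_iff leq_def)
        have IH: "C r y = (if r = y then 1 else 0)" if r: "r \<in> box y x - {x}" for r
        proof -
          have "leq y r" "leq r x" "r \<noteq> x" using r by (auto simp: box_iff)
          then have "nat ((fst r - fst y) + (snd r - snd y)) < k"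
            using k by (cases r, cases x, cases y) (auto simp: leq_def)
          then show ?thesis using less.IH \<open>leq y r\<close> by blast
        qed
        have "B x y = (\<Sum>r\<in>box y x. B x r * C r y)" using key[OF yx] by simp
        also have "\<dots> = B x x * C x y + (\<Sum>r\<in>box y x - {x}. B x r * C r y)"
          using xin by (simp add: sum.remove)
        also have "(\<Sum>r\<in>box y x - {x}. B x r * C r y) = (\<Sum>r\<in>box y x - {x}. B x r * (if r = y then 1 else 0))"
          by (intro sum.cong refl) (simp add: IH)
        also have "\<dots> = B x y"
        proof -
          have yin: "y \<in> box y x - {x}" using yx False by (simp add: box_iff leq_def)
          have "(\<Sum>r\<in>box y x - {x}. B x r * (if r = y then 1 else 0)) = (\<Sum>r\<in>box y x - {x}. if r = y then B x r else 0)"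
            by (intro sum.cong) auto
          also have "\<dots> = B x y" using yin by (simp add: sum.delta')
          finally show ?thesis .
        qed
        finally show ?thesis using False Bd by simp
      qed
    qed
  qed
  assume "leq y x"
  then show ?thesis using main unfolding C_def by blast
qed



lemma qpoch_neg: assumes "(p::complex) \<noteq> 0" "k < 0" shows "qpoch p p k = 0"
proof -
  have "1 \<in> {1..nat (- k)}" using assms by auto
  moreover have "1 - p * p powi (- int 1) = 0" using assms by (simp add: power_int_minus)
  ultimately have "(\<Prod>i\<in>{1..nat (- k)}. 1 - p * p powi (- int i)) = 0"
    by (intro prod_zero) (auto intro!: bexI[of _ 1])
  then show ?thesis using assms unfolding qpoch_def by simp
qed

lemma Phi_neg: assumes "(p::complex) \<noteq> 0" "k < 0 \<or> l < 0" shows "Phi k l X Y p = 0"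
  using assms qpoch_neg[of p] unfolding Phi_def by auto

lemma Phi_00: "Phi 0 0 X Y p = 1"
  by (simp add: Phi_def qpoch_def)

lemma sum_int_shift: assumes "N \<le> n" shows "(\<Sum>r\<in>{N..n}. f r) = (\<Sum>i\<le>nat (n - N). f (N + int i))"
proof -
  have im: "{N..n} = (\<lambda>i. N + int i) ` {..nat (n - N)}"
  proof
    show "{N..n} \<subseteq> (\<lambda>i. N + int i) ` {..nat (n - N)}"
    proof
      fix r assume "r \<in> {N..n}"
      then show "r \<in> (\<lambda>i. N + int i) ` {..nat (n - N)}"
        by (intro image_eqI[of _ _ "nat (r - N)"]) auto
    qed
  qed (use assms in \<open>auto simp: le_nat_iff\<close>)
  have "inj_on (\<lambda>i. N + int i) {..nat (n - N)}" by (auto simp: inj_on_def)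
  then show ?thesis unfolding im by (simp add: sum.reindex)
qed

lemma box_sum: assumes "leq y x"
  shows "(\<Sum>r\<in>box y x. f r) = (\<Sum>i\<le>nat (fst x - fst y). \<Sum>j\<le>nat (snd x - snd y). f (fst y + int i, snd y + int j))"
proof -
  have "(\<Sum>r\<in>box y x. f r) = (\<Sum>r1\<in>{fst y..fst x}. \<Sum>r2\<in>{snd y..snd x}. f (r1, r2))"
    unfolding box_def by (simp add: sum.cartesian_product)
  also have "\<dots> = (\<Sum>i\<le>nat (fst x - fst y). \<Sum>j\<le>nat (snd x - snd y). f (fst y + int i, snd y + int j))"
    using assms unfolding leq_def by (simp add: sum_int_shift)
  finally show ?thesis .
qed

theorem proposition4p1:
  fixes z w q :: complex and n m N M :: int
  assumes "q \<noteq> 0"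
    and "\<And>k::nat. k \<ge> 1 \<Longrightarrow> q ^ k \<noteq> 1"
    and "\<And>k::int. z * q powi k \<noteq> 1"
    and "\<And>k::int. w * q powi k \<noteq> 1"
    and "\<And>k::int. z * w * q powi k \<noteq> 1"
    and "n \<ge> N" and "m \<ge> M"
  shows "(\<Sum>r\<in>{N..n}. \<Sum>s\<in>{M..m}.
            q powi (n + m - r - s)
            * Phi (n - r) (m - s) (z * q powi (2*r - s)) (w * q powi (2*s - r)) q
            * Phi (r - N) (s - M) (z * q powi (2*r - s)) (w * q powi (2*s - r)) (inverse q))
         = (if n = N \<and> m = M then 1 else 0)"
proof -
  interpret qctx q using assms(1,2) by unfold_locales
  define A where "A x r = q powi (fst x + snd x - fst r - snd r) * Phi (fst x - fst r) (snd x - snd r)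
      (z * q powi (2 * fst r - snd r)) (w * q powi (2 * snd r - fst r)) q" for x r :: "int \<times> int"
  define B where "B x r = Phi (fst x - fst r) (snd x - snd r)
      (z * q powi (2 * fst x - snd x)) (w * q powi (2 * snd x - fst x)) (inverse q)" for x r :: "int \<times> int"
  have Az: "A x r = 0" if "\<not> leq r x" for x r
    unfolding A_def using that Phi_neg[OF q0] by (auto simp: leq_def)
  have Bz: "B x r = 0" if "\<not> leq r x" for x r
    unfolding B_def using that Phi_neg[of "inverse q"] q0 by (auto simp: leq_def)
  have Ad: "A x x = 1" for x unfolding A_def by (simp add: Phi_00)
  have Bd: "B x x = 1" for x unfolding B_def by (simp add: Phi_00)
  have BA: "(\<Sum>r\<in>box y x. B x r * A r y) = (if x = y then 1 else 0)" if yx: "leq y x" for x y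
  proof -
    obtain N' M' where y: "y = (N', M')" by (cases y)
    obtain n' m' where x: "x = (n', m')" by (cases x)
    define a where "a = nat (n' - N')"
    define b where "b = nat (m' - M')"
    have n': "n' = N' + int a" and m': "m' = M' + int b" using yx unfolding a_def b_def x y leq_def by auto
    define Z where "Z = z * q powi (2 * N' - M')"
    define W where "W = w * q powi (2 * M' - N')"
    have hZ: "\<And>u. Z * q powi u \<noteq> 1"
    proof -
      fix u
      have "Z * q powi u = z * q powi (2 * N' - M' + u)" unfolding Z_def by (simp add: pa mult.assoc)
      then show "Z * q powi u \<noteq> 1" using assms(3) by simp
    qed
    have hW: "\<And>u. W * q powi u \<noteq> 1"
    proof -
      fix u
      have "W * q powi u = w * q powi (2 * M' - N' + u)" unfolding W_def by (simp add: pa mult.assoc)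
      then show "W * q powi u \<noteq> 1" using assms(4) by simp
    qed
    have hc: "\<And>u. Z * W * q powi u \<noteq> 1"
    proof -
      fix u
      have "Z * W * q powi u = z * w * (q powi (2 * N' - M') * q powi (2 * M' - N') * q powi u)"
        unfolding Z_def W_def by (simp add: ac_simps)
      also have "\<dots> = z * w * q powi (2 * N' - M' + (2 * M' - N') + u)" by (simp only: pa)
      finally have "Z * W * q powi u = z * w * q powi (2 * N' - M' + (2 * M' - N') + u)" .
      then show "Z * W * q powi u \<noteq> 1" using assms(5) by simp
    qed
    have "(\<Sum>r\<in>box y x. B x r * A r y) = (\<Sum>i\<le>a. \<Sum>j\<le>b. B x (N' + int i, M' + int j) * A (N' + int i, M' + int j) y)"
      using box_sum[OF yx] unfolding x y a_def b_def by simp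
    also have "\<dots> = (\<Sum>i\<le>a. \<Sum>j\<le>b. Phi (int a - int i) (int b - int j) (Z * q powi (2 * int a - int b))
            (W * q powi (2 * int b - int a)) (inverse q) * q ^ (i + j) * Phi (int i) (int j) Z W q)"
    proof (intro sum.cong refl)
      fix i j
      have e1: "z * q powi (2 * n' - m') = Z * q powi (2 * int a - int b)"
        unfolding Z_def using pa'[of "2 * N' - M'" "2 * int a - int b" "2 * n' - m'"] n' m'
        by (simp add: mult.assoc)
      have e2: "w * q powi (2 * m' - n') = W * q powi (2 * int b - int a)"
        unfolding W_def using pa'[of "2 * M' - N'" "2 * int b - int a" "2 * m' - n'"] n' m'
        by (simp add: mult.assoc)
      have e3: "q powi (N' + int i + (M' + int j) - N' - M') = q ^ (i + j)"
      proof -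
        have "N' + int i + (M' + int j) - N' - M' = int (i + j)" by simp
        then show ?thesis by (simp only: power_int_of_nat)
      qed
      show "B x (N' + int i, M' + int j) * A (N' + int i, M' + int j) y =
         Phi (int a - int i) (int b - int j) (Z * q powi (2 * int a - int b))
            (W * q powi (2 * int b - int a)) (inverse q) * q ^ (i + j) * Phi (int i) (int j) Z W q"
        unfolding A_def B_def x y fst_conv snd_conv e1 e2 e3 Z_def[symmetric] W_def[symmetric]
        using n' m' by (simp add: ac_simps)
    qed
    also have "\<dots> = (if a = 0 \<and> b = 0 then 1 else 0)"
      by (rule BA_core[OF hZ hW hc])
    also have "(a = 0 \<and> b = 0) \<longleftrightarrow> x = y" unfolding x y using n' m' by auto
    finally show ?thesis .
  qed
  have "(\<Sum>r\<in>{N..n}. \<Sum>s\<in>{M..m}.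
            q powi (n + m - r - s)
            * Phi (n - r) (m - s) (z * q powi (2*r - s)) (w * q powi (2*s - r)) q
            * Phi (r - N) (s - M) (z * q powi (2*r - s)) (w * q powi (2*s - r)) (inverse q))
       = (\<Sum>p\<in>box (N, M) (n, m). A (n, m) p * B p (N, M))"
    unfolding box_def A_def B_def by (simp add: sum.cartesian_product split_beta)
  also have "\<dots> = (if (n, m) = (N, M) then 1 else 0)"
    by (rule tri[of A B]) (use Az Bz Ad Bd BA assms(6,7) in \<open>auto simp: leq_def\<close>)
  finally show ?thesis by simp
qed


end
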